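(* Let $0<\theta<1$ and let $\phi_1,\phi_2$ be Hecke–Maass cusp forms for $\mathrm{PSL}_2(\mathbb Z)$ with Laplace eigenvalues $s_1(1-s_1)$, $s_2(1-s_2)$ and Hecke eigenvalues $\lambda_{\phi_1}(n),\lambda_{\phi_2}(n)$. Then $B_\theta(1_B\phi_1,1_B\phi_2)=0$ unless $\phi_1$ and $\phi_2$ are both even. If both are even, then \[ B_\theta(1_B\phi_1,1_B\phi_2)=4\pi\sum_{m,n\ge1}\frac{\tau_1((m,n))\lambda_{\phi_1}(m)\lambda_{\phi_2}(n)}{(mn)^{1/2}}\,I_\theta^{s_1,s_2}(m,n), \quad I_\theta^{s_1,s_2}(m,n)=\int_{\max(m,n)}^\infty K_{s_1-1/2}(2\pi y)\overline{K_{s_2-1/2}(2\pi y)}\,f_{\theta,m,n}(y)\frac{dy}{y}, \] where $f_{\theta,m,n}(y)=1$ if $0<\theta<1/2$, $=e^{-2\pi^2y^2(m^2+n^2)}$ if $\theta=1/2$, and $=0$ if $\theta>1/2$.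
   Context: $M=\mathrm{PSL}_2(\mathbb Z)\backslash\mathbb H$, $z=x+iy$, $e(z)=e^{2\pi iz}$, $B=\{z\in M:\Im z>1\}$ (region $y>1$ of the standard fundamental domain), $1_B$ its indicator function. A Hecke–Maass cusp form $\phi$ with eigenvalue $s(1-s)$ and Hecke eigenvalues $\lambda_\phi(n)$ is normalized to have Fourier expansion $\phi(x+iy)=\sum_{m\ne0}\epsilon_{\phi,m}\,2\lambda_\phi(|m|)\,y^{1/2}K_{s-1/2}(2\pi|m|y)\,e(mx)$, where $\epsilon_{\phi,m}=1$ if $\phi$ is even and $\epsilon_{\phi,m}=\mathrm{sgn}(m)$ if $\phi$ is odd; $K_\nu$ is the $K$-Bessel function. $\tau_1(n)=\sum_{d\mid n}d$. For a function $\psi$ supported in $B$ let $V_m^\psi(y)=\int_0^1\psi(x+iy)e(-mx)dx$ for $y>1$ and $V_m^\psi(y)=0$ for $y\le 1$. For such $\psi$ whose zero-th coefficient $V_0^\psi$ vanishes identically (as is the case for $1_B\phi$), $B_\theta$ is defined by $B_\theta(\psi_1,\psi_2)=\frac\pi4\sum_{m,n\neq0}\tau_1((|m|,|n|))\int_0^\infty V_m^{\psi_1}(y/|m|)\overline{V_n^{\psi_2}(y/|n|)}f_{\theta,m,n}(y)\frac{dy}{y^2}$, with $f_{\theta,m,n}$ as in the claim (the series converges absolutely). *)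

theory Defs
  imports "HOL-Analysis.Analysis"
begin

definition ee :: "complex \<Rightarrow> complex" where
  "ee z = exp (2 * of_real pi * \<i> * z)"

definition besselK :: "complex \<Rightarrow> real \<Rightarrow> complex" where
  "besselK \<nu> x = (\<integral>t\<in>{0<..}. complex_of_real (exp (- x * cosh t)) * cosh (\<nu> * complex_of_real t) \<partial>lborel)"

definition tau1 :: "nat \<Rightarrow> nat" where
  "tau1 n = (\<Sum>d\<in>{d. d dvd n}. d)"

definition eps :: "bool \<Rightarrow> int \<Rightarrow> complex" where
  "eps ev m = (if ev then 1 else of_int (sgn m))"

definition hecke_op :: "nat \<Rightarrow> (complex \<Rightarrow> complex) \<Rightarrow> complex \<Rightarrow> complex" where
  "hecke_op n \<phi> z = (1 / of_real (sqrt (real n))) *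
     (\<Sum>(a, b, d)\<in>{(a, b, d). a * d = n \<and> b < d}. \<phi> ((of_nat a * z + of_nat b) / of_nat d))"

definition laplace_eigenfunction :: "(complex \<Rightarrow> complex) \<Rightarrow> complex \<Rightarrow> bool" where
  "laplace_eigenfunction \<phi> \<mu> \<longleftrightarrow>
    (\<exists>Dx Dy :: real \<Rightarrow> real \<Rightarrow> complex.
      (\<forall>u v. v > 0 \<longrightarrow>
         ((\<lambda>t. \<phi> (Complex t v)) has_vector_derivative Dx u v) (at u) \<and>
         ((\<lambda>t. \<phi> (Complex u t)) has_vector_derivative Dy u v) (at v)) \<and>
      (\<forall>x y. y > 0 \<longrightarrow>
         (\<exists>a b. ((\<lambda>t. Dx t y) has_vector_derivative a) (at x) \<and>
                ((\<lambda>t. Dy x t) has_vector_derivative b) (at y) \<and>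
                - complex_of_real (y\<^sup>2) * (a + b) = \<mu> * \<phi> (Complex x y))))"

text \<open>Hecke--Maass cusp form for PSL_2(Z) (as a function on the upper half plane),
  with spectral parameter s (eigenvalue s(1-s)), Hecke eigenvalues lam, parity ev
  (True = even, False = odd), normalized by the stated Fourier expansion.\<close>
definition hecke_maass_cusp_form ::
  "(complex \<Rightarrow> complex) \<Rightarrow> complex \<Rightarrow> (nat \<Rightarrow> real) \<Rightarrow> bool \<Rightarrow> bool" where
  "hecke_maass_cusp_form \<phi> s lam ev \<longleftrightarrow>
     (\<forall>z. Im z > 0 \<longrightarrow> \<phi> (z + 1) = \<phi> z \<and> \<phi> (- 1 / z) = \<phi> z) \<and>
     laplace_eigenfunction \<phi> (s * (1 - s)) \<and>
     (\<forall>n\<ge>1. \<forall>z. Im z > 0 \<longrightarrow> hecke_op n \<phi> z = complex_of_real (lam n) * \<phi> z) \<and>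
     (\<forall>z. Im z > 0 \<longrightarrow> \<phi> (- cnj z) = (if ev then \<phi> z else - \<phi> z)) \<and>
     (\<forall>x y. y > 0 \<longrightarrow>
        ((\<lambda>m::int. eps ev m * 2 * complex_of_real (lam (nat \<bar>m\<bar>)) * complex_of_real (sqrt y)
              * besselK (s - 1/2) (2 * pi * real_of_int \<bar>m\<bar> * y) * ee (of_int m * of_real x))
          has_sum \<phi> (Complex x y)) {m. m \<noteq> 0})"

text \<open>The function 1_B phi, lifted to the strip: equals phi for Im z > 1, 0 otherwise.\<close>
definition restrictB :: "(complex \<Rightarrow> complex) \<Rightarrow> complex \<Rightarrow> complex" where
  "restrictB \<phi> z = (if Im z > 1 then \<phi> z else 0)"

definition Vcoef :: "int \<Rightarrow> (complex \<Rightarrow> complex) \<Rightarrow> real \<Rightarrow> complex" where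
  "Vcoef m \<psi> y = (if y > 1 then (\<integral>x\<in>{0..1}. \<psi> (Complex x y) * ee (- of_int m * of_real x) \<partial>lborel) else 0)"

definition fth :: "real \<Rightarrow> real \<Rightarrow> real \<Rightarrow> real \<Rightarrow> real" where
  "fth \<theta> m n y = (if \<theta> < 1/2 then 1
                   else if \<theta> = 1/2 then exp (- 2 * pi\<^sup>2 * y\<^sup>2 * (m\<^sup>2 + n\<^sup>2)) else 0)"

definition B_theta :: "real \<Rightarrow> (complex \<Rightarrow> complex) \<Rightarrow> (complex \<Rightarrow> complex) \<Rightarrow> complex" where
  "B_theta \<theta> \<psi>1 \<psi>2 = complex_of_real (pi / 4) *
     (\<Sum>\<^sub>\<infinity>(m, n)\<in>{(m::int, n::int). m \<noteq> 0 \<and> n \<noteq> 0}.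
        of_nat (tau1 (gcd (nat \<bar>m\<bar>) (nat \<bar>n\<bar>))) *
        (\<integral>y\<in>{0<..}. Vcoef m \<psi>1 (y / real_of_int \<bar>m\<bar>) * cnj (Vcoef n \<psi>2 (y / real_of_int \<bar>n\<bar>))
             * complex_of_real (fth \<theta> (of_int m) (of_int n) y / y\<^sup>2) \<partial>lborel))"

definition I_theta :: "real \<Rightarrow> complex \<Rightarrow> complex \<Rightarrow> nat \<Rightarrow> nat \<Rightarrow> complex" where
  "I_theta \<theta> s1 s2 m n = (\<integral>y\<in>{real (max m n)<..}.
      besselK (s1 - 1/2) (2 * pi * y) * cnj (besselK (s2 - 1/2) (2 * pi * y))
      * complex_of_real (fth \<theta> (real m) (real n) y / y) \<partial>lborel)"

end

theory Submission
  imports Defs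
begin

lemma ee_add: "ee a * ee b = ee (a + b)"
  unfolding ee_def by (simp add: exp_add[symmetric] algebra_simps)

lemma ee_int: "ee (of_int j) = 1"
  unfolding ee_def by (simp add: mult.commute mult.left_commute)

lemma norm_ee_real: "norm (ee (of_real t)) = 1"
  unfolding ee_def by (simp add: norm_exp_eq_Re)

lemma orth:
  fixes j :: int
  shows "(\<integral>x\<in>{0..1}. ee (of_int j * of_real x) \<partial>lborel) = (if j = 0 then 1 else 0)"
proof (cases "j = 0")
  case True
  have "(LBINT x=ereal 0..ereal 1. (1::complex)) = of_real 1 - of_real 0"
  proof (rule interval_integral_FTC_finite)
    fix x :: real
    have "((\<lambda>x. of_real x :: complex) has_vector_derivative of_real 1) (at x within {min 0 1..max 0 1})"
      by (rule has_vector_derivative_of_real) (auto intro!: derivative_eq_intros)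
    then show "((\<lambda>x. of_real x :: complex) has_vector_derivative 1) (at x within {min 0 1..max 0 1})" by simp
  qed auto
  then show ?thesis using True interval_integral_Icc[of 0 1 "\<lambda>_. 1::complex"] by (simp add: ee_def)
next
  case False
  define c where "c = 2 * of_real pi * \<i> * (of_int j :: complex)"
  have c0: "c \<noteq> 0" using False by (simp add: c_def)
  have ee: "ee (of_int j * of_real x) = exp (c * of_real x)" for x
    by (simp add: ee_def c_def algebra_simps)
  have "(LBINT x=ereal 0..ereal 1. exp (c * of_real x)) = exp (c * of_real 1) / c - exp (c * of_real 0) / c"
  proof (rule interval_integral_FTC_finite)
    show "continuous_on {min 0 1..max 0 1} (\<lambda>x::real. exp (c * of_real x))"
      by (intro continuous_intros)
    fix x :: real
    have "((\<lambda>z. exp (c * z) / c) has_field_derivative exp (c * of_real x)) (at (of_real x))"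
      using c0 by (auto intro!: derivative_eq_intros)
    from has_vector_derivative_real_field[OF this]
    show "((\<lambda>x::real. exp (c * of_real x) / c) has_vector_derivative exp (c * of_real x)) (at x within {min 0 1..max 0 1})"
      .
  qed
  moreover have "exp (c * of_real 1) = 1" using ee_int[of j] ee[of 1] by simp
  ultimately have "(LBINT x=ereal 0..ereal 1. exp (c * of_real x)) = 0" by simp
  then show ?thesis using False interval_integral_Icc[of 0 1 "\<lambda>x. exp (c * of_real x)"] by (simp add: ee)
qed

lemma infsum_sym2:
  fixes f :: "'a \<Rightarrow> complex"
  assumes h: "bij_betw h X Y" and d: "X \<inter> Y = {}" and s: "\<And>x. x \<in> X \<Longrightarrow> f (h x) = f x"
  shows "infsum f (X \<union> Y) = 2 * infsum f X"
proof (cases "f summable_on X")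
  case True
  have "(\<lambda>x. f (h x)) summable_on X" using True summable_on_cong[of X "\<lambda>x. f (h x)" f] s by blast
  then have sY: "f summable_on Y" using summable_on_reindex_bij_betw[OF h] by blast
  have "infsum f Y = infsum (\<lambda>x. f (h x)) X" using infsum_reindex_bij_betw[OF h, of f] by simp
  also have "\<dots> = infsum f X" using s by (rule infsum_cong)
  finally have "infsum f Y = infsum f X" .
  then show ?thesis using infsum_Un_disjoint[OF True sY d] by simp
next
  case False
  then have "\<not> f summable_on (X \<union> Y)" by (meson Un_upper1 summable_on_subset_banach)
  then show ?thesis using False by (simp add: infsum_not_exists)
qed

lemma infsum_odd:
  fixes f :: "'a \<Rightarrow> complex"
  assumes h: "bij_betw h X X" and s: "\<And>x. x \<in> X \<Longrightarrow> f (h x) = - f x"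
  shows "infsum f X = 0"
proof -
  have "infsum f X = infsum (\<lambda>x. f (h x)) X" using infsum_reindex_bij_betw[OF h, of f] by simp
  also have "\<dots> = infsum (\<lambda>x. - f x) X" using s by (rule infsum_cong)
  also have "\<dots> = - infsum f X" by (simp add: infsum_uminus)
  finally show ?thesis by simp
qed

lemma infsum_four:
  fixes T :: "nat \<Rightarrow> nat \<Rightarrow> complex"
  shows "(\<Sum>\<^sub>\<infinity>(m, n)\<in>{(m::int, n::int). m \<noteq> 0 \<and> n \<noteq> 0}. T (nat \<bar>m\<bar>) (nat \<bar>n\<bar>))
     = 4 * (\<Sum>\<^sub>\<infinity>(m, n)\<in>{(m::nat, n::nat). 1 \<le> m \<and> 1 \<le> n}. T m n)"
proof -
  define f where "f = (\<lambda>(m::int, n::int). T (nat \<bar>m\<bar>) (nat \<bar>n\<bar>))"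
  have e1: "{(m::int, n::int). m \<noteq> 0 \<and> n \<noteq> 0} = {(m, n). m > 0 \<and> n \<noteq> 0} \<union> {(m, n). m < 0 \<and> n \<noteq> 0}"
    by auto
  have b1: "bij_betw (\<lambda>(m::int, n::int). (-m, n)) {(m, n). m > 0 \<and> n \<noteq> 0} {(m, n). m < 0 \<and> n \<noteq> 0}"
    by (rule bij_betwI[where g="\<lambda>(m, n). (-m, n)"]) auto
  have s1: "infsum f {(m::int, n::int). m \<noteq> 0 \<and> n \<noteq> 0} = 2 * infsum f {(m, n). m > 0 \<and> n \<noteq> 0}"
    unfolding e1 by (rule infsum_sym2[OF b1]) (auto simp: f_def)
  have e2: "{(m::int, n::int). m > 0 \<and> n \<noteq> 0} = {(m, n). m > 0 \<and> n > 0} \<union> {(m, n). m > 0 \<and> n < 0}"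
    by auto
  have b2: "bij_betw (\<lambda>(m::int, n::int). (m, -n)) {(m, n). m > 0 \<and> n > 0} {(m, n). m > 0 \<and> n < 0}"
    by (rule bij_betwI[where g="\<lambda>(m, n). (m, -n)"]) auto
  have s2: "infsum f {(m::int, n::int). m > 0 \<and> n \<noteq> 0} = 2 * infsum f {(m, n). m > 0 \<and> n > 0}"
    unfolding e2 by (rule infsum_sym2[OF b2]) (auto simp: f_def)
  have b3: "bij_betw (\<lambda>(m::nat, n::nat). (int m, int n)) {(m, n). 1 \<le> m \<and> 1 \<le> n} {(m, n). m > 0 \<and> n > 0}"
    by (rule bij_betwI[where g="\<lambda>(m, n). (nat m, nat n)"]) auto
  have s3: "infsum f {(m::int, n::int). m > 0 \<and> n > 0} = (\<Sum>\<^sub>\<infinity>(m, n)\<in>{(m::nat, n::nat). 1 \<le> m \<and> 1 \<le> n}. T m n)"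
  proof -
    have "infsum f {(m::int, n::int). m > 0 \<and> n > 0} = infsum (\<lambda>x. f ((\<lambda>(m::nat, n::nat). (int m, int n)) x)) {(m, n). 1 \<le> m \<and> 1 \<le> n}"
      using infsum_reindex_bij_betw[OF b3, of f] by simp
    also have "\<dots> = (\<Sum>\<^sub>\<infinity>(m, n)\<in>{(m::nat, n::nat). 1 \<le> m \<and> 1 \<le> n}. T m n)"
      by (rule infsum_cong) (auto simp: f_def)
    finally show ?thesis .
  qed
  have "infsum f {(m::int, n::int). m \<noteq> 0 \<and> n \<noteq> 0} = 4 * (\<Sum>\<^sub>\<infinity>(m, n)\<in>{(m::nat, n::nat). 1 \<le> m \<and> 1 \<le> n}. T m n)"
    using s1 s2 s3 by simp
  then show ?thesis unfolding f_def .
qed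

lemma split_int_sum:
  fixes t :: "int \<Rightarrow> 'a::banach"
  assumes hs: "(t has_sum L) {k. k \<noteq> 0}"
  shows "(\<lambda>i::nat. t (int i + 1) + t (- (int i + 1))) sums L"
proof -
  define P where "P = {k::int. k > 0}"
  define N where "N = {k::int. k < 0}"
  have U: "{k::int. k \<noteq> 0} = P \<union> N" and D: "P \<inter> N = {}" by (auto simp: P_def N_def)
  have sm: "t summable_on {k. k \<noteq> 0}" using hs by (auto simp: summable_on_def)
  have sP: "t summable_on P" by (rule summable_on_subset_banach[OF sm]) (auto simp: P_def)
  have sN: "t summable_on N" by (rule summable_on_subset_banach[OF sm]) (auto simp: N_def)
  have hP: "(t has_sum infsum t P) P" using sP by simp
  have hN: "(t has_sum infsum t N) N" using sN by simp
  have "(t has_sum (infsum t P + infsum t N)) {k. k \<noteq> 0}"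
    unfolding U by (rule has_sum_Un_disjoint[OF hP hN D])
  then have L: "L = infsum t P + infsum t N" using hs infsumI by metis
  have bP: "bij_betw (\<lambda>i::nat. int i + 1) UNIV P"
    by (rule bij_betwI[where g="\<lambda>k. nat (k - 1)"]) (auto simp: P_def)
  have bN: "bij_betw (\<lambda>i::nat. - (int i + 1)) UNIV N"
    by (rule bij_betwI[where g="\<lambda>k. nat (- k - 1)"]) (auto simp: N_def)
  have "((\<lambda>i. t (int i + 1)) has_sum infsum t P) UNIV" using hP has_sum_reindex_bij_betw[OF bP] by blast
  then have 1: "(\<lambda>i. t (int i + 1)) sums infsum t P" by (rule has_sum_imp_sums)
  have "((\<lambda>i. t (- (int i + 1))) has_sum infsum t N) UNIV" using hN has_sum_reindex_bij_betw[OF bN] by blast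
  then have 2: "(\<lambda>i. t (- (int i + 1))) sums infsum t N" by (rule has_sum_imp_sums)
  show ?thesis unfolding L by (rule sums_add[OF 1 2])
qed

lemma norm_ee_ix: "norm (ee (of_int k * of_real x)) = 1"
  using norm_ee_real[of "of_int k * x"] by simp

lemma norm_ee_mix: "norm (ee (- of_int k * of_real x)) = 1"
  using norm_ee_real[of "- of_int k * x"] by simp

lemma cont_ee: "continuous_on A (\<lambda>x::real. ee (c * of_real x))"
  unfolding ee_def by (intro continuous_intros)

lemma ee_prod: "ee (of_int k * of_real x) * ee (- of_int m * of_real x) = ee (of_int (k - m) * of_real x)"
  by (simp add: ee_add algebra_simps)

lemma set_int_ee: "set_integrable lborel {0..1::real} (\<lambda>x. ee (c * of_real x))"
  unfolding set_integrable_def by (rule borel_integrable_compact) (auto intro: cont_ee)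

lemma fourier_coef:
  assumes H: "hecke_maass_cusp_form \<phi> s lam ev" and y: "y > 0" and m: "m \<noteq> 0"
  shows "(\<integral>x\<in>{0..1}. \<phi> (Complex x y) * ee (- of_int m * of_real x) \<partial>lborel) =
    eps ev m * 2 * complex_of_real (lam (nat \<bar>m\<bar>)) * complex_of_real (sqrt y) * besselK (s - 1/2) (2 * pi * real_of_int \<bar>m\<bar> * y)"
proof -
  define a where "a k = eps ev k * 2 * complex_of_real (lam (nat \<bar>k\<bar>)) * complex_of_real (sqrt y) * besselK (s - 1/2) (2 * pi * real_of_int \<bar>k\<bar> * y)" for k
  have hs: "((\<lambda>k. a k * ee (of_int k * of_real x)) has_sum \<phi> (Complex x y)) {k. k \<noteq> 0}" for x
    using H y unfolding hecke_maass_cusp_form_def a_def by auto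
  have "((\<lambda>k. a k) has_sum \<phi> (Complex 0 y)) {k. k \<noteq> 0}"
    using hs[of 0] by (simp add: ee_def)
  then have "a summable_on {k. k \<noteq> 0}" by (auto simp: summable_on_def)
  then have "(\<lambda>k. norm (a k)) summable_on {k. k \<noteq> 0}"
    using summable_on_iff_abs_summable_on_complex by blast
  then have "((\<lambda>k. norm (a k)) has_sum infsum (\<lambda>k. norm (a k)) {k. k \<noteq> 0}) {k. k \<noteq> 0}" by simp
  from split_int_sum[OF this]
  have sb: "summable (\<lambda>i::nat. norm (a (int i + 1)) + norm (a (- (int i + 1))))"
    by (auto simp: sums_iff)
  define b where "b i = norm (a (int i + 1)) + norm (a (- (int i + 1)))" for i :: nat
  define g where "g i x = (a (int i + 1) * ee (of_int (int i + 1) * of_real x) + a (- (int i + 1)) * ee (of_int (- (int i + 1)) * of_real x))" for i :: nat and x :: real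
  define f where "f i x = indicator {0..1::real} x *\<^sub>R (g i x * ee (- of_int m * of_real x))" for i x
  have gs: "(\<lambda>i. g i x) sums \<phi> (Complex x y)" for x
    unfolding g_def using split_int_sum[OF hs[of x]] by simp
  have fs: "(\<lambda>i. f i x) sums (indicator {0..1::real} x *\<^sub>R (\<phi> (Complex x y) * ee (- of_int m * of_real x)))" for x
    unfolding f_def by (intro sums_scaleR_right sums_mult2 gs)
  have g_eq: "g i x * ee (- of_int m * of_real x) = a (int i + 1) * ee (of_int (int i + 1 - m) * of_real x)
      + a (- (int i + 1)) * ee (of_int (- (int i + 1) - m) * of_real x)" for i x
    unfolding g_def by (simp only: distrib_right mult.assoc ee_prod)
  have fint: "integrable lborel (f i)" for i
    unfolding f_def by (rule borel_integrable_compact) (auto simp: g_def ee_def intro!: continuous_intros)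
  have fnorm: "norm (f i x) \<le> indicator {0..1::real} x * b i" for i x
  proof -
    have "norm (g i x * ee (- of_int m * of_real x)) \<le> b i"
      unfolding g_def b_def norm_mult norm_ee_mix mult_1_right
      by (rule order_trans[OF norm_triangle_ineq]) (simp only: norm_mult norm_ee_ix mult_1_right order_refl)
    then show ?thesis unfolding f_def by (auto simp: indicator_def)
  qed
  have b0: "b i \<ge> 0" for i by (simp add: b_def)
  have ind_int: "integrable lborel (\<lambda>x. indicator {0..1::real} x * b i)" for i
    using borel_integrable_compact[of "{0..1::real}" "\<lambda>_. b i"] by (simp add: mult.commute)
  have intb: "(\<integral>x. norm (f i x) \<partial>lborel) \<le> b i" for i
  proof -
    have "(\<integral>x. norm (f i x) \<partial>lborel) \<le> (\<integral>x. indicator {0..1::real} x * b i \<partial>lborel)"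
      by (rule integral_mono[OF integrable_norm[OF fint] ind_int fnorm])
    also have "\<dots> = b i" by simp
    finally show ?thesis .
  qed
  have sint: "summable (\<lambda>i. \<integral>x. norm (f i x) \<partial>lborel)"
    by (rule summable_comparison_test'[OF sb[folded b_def], of 0]) (use intb in auto)
  have snorm: "AE x in lborel. summable (\<lambda>i. norm (f i x))"
  proof (rule AE_I2)
    fix x
    show "summable (\<lambda>i. norm (f i x))"
    proof (rule summable_comparison_test'[OF sb[folded b_def], of 0])
      fix i :: nat
      show "norm (norm (f i x)) \<le> b i" using fnorm[of i x] b0[of i] by (cases "0 \<le> x \<and> x \<le> 1") (auto simp: indicator_def)
    qed
  qed
  have "(\<integral>x. (\<Sum>i. f i x) \<partial>lborel) = (\<Sum>i. integral\<^sup>L lborel (f i))"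
    by (rule integral_suminf[OF fint snorm sint])
  moreover have "(\<integral>x. (\<Sum>i. f i x) \<partial>lborel) = (\<integral>x\<in>{0..1}. \<phi> (Complex x y) * ee (- of_int m * of_real x) \<partial>lborel)"
    unfolding set_lebesgue_integral_def using fs by (simp add: sums_iff)
  moreover have fi: "integral\<^sup>L lborel (f i) = a (int i + 1) * (if int i + 1 - m = 0 then 1 else 0)
      + a (- (int i + 1)) * (if - (int i + 1) - m = 0 then 1 else 0)" for i
  proof -
    have "integral\<^sup>L lborel (f i) = (\<integral>x\<in>{0..1}. a (int i + 1) * ee (of_int (int i + 1 - m) * of_real x)
      + a (- (int i + 1)) * ee (of_int (- (int i + 1) - m) * of_real x) \<partial>lborel)"
      unfolding f_def set_lebesgue_integral_def g_eq ..
    also have "\<dots> = a (int i + 1) * (\<integral>x\<in>{0..1}. ee (of_int (int i + 1 - m) * of_real x) \<partial>lborel)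
      + a (- (int i + 1)) * (\<integral>x\<in>{0..1}. ee (of_int (- (int i + 1) - m) * of_real x) \<partial>lborel)"
      by (subst set_integral_add(2)) (auto intro!: set_integrable_mult_right set_int_ee)
    also have "\<dots> = a (int i + 1) * (if int i + 1 - m = 0 then 1 else 0)
      + a (- (int i + 1)) * (if - (int i + 1) - m = 0 then 1 else 0)"
      by (simp only: orth)
    finally show ?thesis .
  qed
  moreover have "(\<Sum>i. integral\<^sup>L lborel (f i)) = a m"
  proof (cases "m > 0")
    case True
    have "(\<lambda>i. integral\<^sup>L lborel (f i)) = (\<lambda>i. if i = nat m - 1 then a m else 0)"
    proof (rule ext)
      fix i :: nat
      show "integral\<^sup>L lborel (f i) = (if i = nat m - 1 then a m else 0)"
        using True by (cases "int i + 1 = m") (auto simp: fi)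
    qed
    then show ?thesis using sums_single[of "nat m - 1" "\<lambda>_. a m"] sums_unique by metis
  next
    case False
    then have mn: "m < 0" using m by simp
    have "(\<lambda>i. integral\<^sup>L lborel (f i)) = (\<lambda>i. if i = nat (- m) - 1 then a m else 0)"
    proof (rule ext)
      fix i :: nat
      show "integral\<^sup>L lborel (f i) = (if i = nat (- m) - 1 then a m else 0)"
        using mn by (cases "- (int i + 1) = m") (auto simp: fi)
    qed
    then show ?thesis using sums_single[of "nat (- m) - 1" "\<lambda>_. a m"] sums_unique by metis
  qed
  ultimately show ?thesis by (simp add: a_def)
qed

lemma Vcoef_rB:
  assumes H: "hecke_maass_cusp_form \<phi> s lam ev" and m: "m \<noteq> 0" and y: "y > 1"
  shows "Vcoef m (restrictB \<phi>) y = eps ev m * 2 * complex_of_real (lam (nat \<bar>m\<bar>)) * complex_of_real (sqrt y) * besselK (s - 1/2) (2 * pi * real_of_int \<bar>m\<bar> * y)"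
proof -
  have "Vcoef m (restrictB \<phi>) y = (\<integral>x\<in>{0..1}. \<phi> (Complex x y) * ee (- of_int m * of_real x) \<partial>lborel)"
    using y by (simp add: Vcoef_def restrictB_def)
  then show ?thesis using fourier_coef[OF H _ m, of y] y by simp
qed

lemma cnj_eps [simp]: "cnj (eps ev m) = eps ev m"
  by (simp add: eps_def)

lemma real_ident:
  fixes a b t l1 l2 F :: real
  assumes a: "a > 0" and b: "b > 0" and t: "t > 0"
  shows "2 * l1 * sqrt (t / a) * (2 * l2 * sqrt (t / b)) * (F / t^2) = 4 * l1 * l2 / sqrt (a * b) * (F / t)"
proof -
  have "sqrt (t / a) * sqrt (t / b) = t / sqrt (a * b)"
    using a b t by (simp add: real_sqrt_mult[symmetric] real_sqrt_divide power2_eq_square[symmetric])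
  then have "2 * l1 * sqrt (t / a) * (2 * l2 * sqrt (t / b)) * (F / t^2) = 4 * l1 * l2 * (t / sqrt (a * b)) * (F / t^2)"
    by (metis (no_types, lifting) mult.assoc mult.left_commute numeral_Bit0_eq_double mult_2)
  also have "\<dots> = 4 * l1 * l2 / sqrt (a * b) * (F / t)"
    using t by (simp add: power2_eq_square field_simps)
  finally show ?thesis .
qed

lemma term_int:
  assumes H1: "hecke_maass_cusp_form \<phi>1 s1 lam1 ev1" and H2: "hecke_maass_cusp_form \<phi>2 s2 lam2 ev2"
    and m: "m \<noteq> 0" and n: "n \<noteq> 0"
  shows "(\<integral>y\<in>{0<..}. Vcoef m (restrictB \<phi>1) (y / real_of_int \<bar>m\<bar>) * cnj (Vcoef n (restrictB \<phi>2) (y / real_of_int \<bar>n\<bar>))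
             * complex_of_real (fth \<theta> (of_int m) (of_int n) y / y\<^sup>2) \<partial>lborel)
    = eps ev1 m * eps ev2 n * complex_of_real (4 * lam1 (nat \<bar>m\<bar>) * lam2 (nat \<bar>n\<bar>) / sqrt (real (nat \<bar>m\<bar> * nat \<bar>n\<bar>)))
      * I_theta \<theta> s1 s2 (nat \<bar>m\<bar>) (nat \<bar>n\<bar>)"
proof -
  define a where "a = nat \<bar>m\<bar>"
  define b where "b = nat \<bar>n\<bar>"
  have ra: "real_of_int \<bar>m\<bar> = real a" and rb: "real_of_int \<bar>n\<bar> = real b" by (simp_all add: a_def b_def)
  have a0: "real a > 0" and b0: "real b > 0" using m n by (simp_all add: a_def b_def)
  have fth_eq: "fth \<theta> (of_int m) (of_int n) t = fth \<theta> (real a) (real b) t" for t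
  proof -
    have "(of_int m :: real)^2 = (real a)^2" using ra by (metis of_int_abs power2_abs)
    moreover have "(of_int n :: real)^2 = (real b)^2" using rb by (metis of_int_abs power2_abs)
    ultimately show ?thesis by (simp add: fth_def)
  qed
  define K1 where "K1 t = besselK (s1 - 1/2) (2 * pi * t)" for t
  define K2 where "K2 t = besselK (s2 - 1/2) (2 * pi * t)" for t
  define C where "C = eps ev1 m * eps ev2 n * complex_of_real (4 * lam1 a * lam2 b / sqrt (real (a * b)))"
  have pt: "indicator {0<..} t *\<^sub>R (Vcoef m (restrictB \<phi>1) (t / real_of_int \<bar>m\<bar>) * cnj (Vcoef n (restrictB \<phi>2) (t / real_of_int \<bar>n\<bar>))
             * complex_of_real (fth \<theta> (of_int m) (of_int n) t / t\<^sup>2))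
       = C * (indicator {real (max a b)<..} t *\<^sub>R (K1 t * cnj (K2 t) * complex_of_real (fth \<theta> (real a) (real b) t / t)))" for t
  proof (cases "t > real (max a b)")
    case True
    then have t0: "t > 0" and ta: "t / real a > 1" and tb: "t / real b > 1"
      using a0 b0 by (auto simp: field_simps)
    have V1: "Vcoef m (restrictB \<phi>1) (t / real_of_int \<bar>m\<bar>) = eps ev1 m * 2 * complex_of_real (lam1 a) * complex_of_real (sqrt (t / real a)) * K1 t"
      using Vcoef_rB[OF H1 m, of "t / real a"] ta a0 unfolding ra K1_def by (simp add: a_def mult.assoc)
    have V2: "Vcoef n (restrictB \<phi>2) (t / real_of_int \<bar>n\<bar>) = eps ev2 n * 2 * complex_of_real (lam2 b) * complex_of_real (sqrt (t / real b)) * K2 t"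
      using Vcoef_rB[OF H2 n, of "t / real b"] tb b0 unfolding rb K2_def by (simp add: b_def mult.assoc)
    have "Vcoef m (restrictB \<phi>1) (t / real_of_int \<bar>m\<bar>) * cnj (Vcoef n (restrictB \<phi>2) (t / real_of_int \<bar>n\<bar>))
             * complex_of_real (fth \<theta> (of_int m) (of_int n) t / t\<^sup>2)
        = eps ev1 m * eps ev2 n * (K1 t * cnj (K2 t)) * complex_of_real (2 * lam1 a * sqrt (t / a) * (2 * lam2 b * sqrt (t / b)) * (fth \<theta> (real a) (real b) t / t^2))"
      unfolding V1 V2 fth_eq by (simp add: mult_ac)
    also have "\<dots> = C * (K1 t * cnj (K2 t) * complex_of_real (fth \<theta> (real a) (real b) t / t))"
      unfolding real_ident[OF a0 b0 t0] C_def by (simp add: mult_ac)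
    finally show ?thesis using True t0 by simp
  next
    case False
    then have "t \<le> 0 \<or> \<not> t / real a > 1 \<or> \<not> t / real b > 1"
      using a0 b0 by (auto simp: field_simps)
    then show ?thesis using False unfolding ra rb by (auto simp: Vcoef_def)
  qed
  have "(\<integral>y\<in>{0<..}. Vcoef m (restrictB \<phi>1) (y / real_of_int \<bar>m\<bar>) * cnj (Vcoef n (restrictB \<phi>2) (y / real_of_int \<bar>n\<bar>))
             * complex_of_real (fth \<theta> (of_int m) (of_int n) y / y\<^sup>2) \<partial>lborel)
      = (\<integral>t. C * (indicator {real (max a b)<..} t *\<^sub>R (K1 t * cnj (K2 t) * complex_of_real (fth \<theta> (real a) (real b) t / t))) \<partial>lborel)"
    unfolding set_lebesgue_integral_def pt ..
  also have "\<dots> = C * I_theta \<theta> s1 s2 a b"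
    unfolding I_theta_def set_lebesgue_integral_def K1_def K2_def by (rule integral_mult_right_zero)
  finally show ?thesis unfolding C_def a_def b_def .
qed

theorem theorem1p2:
  fixes \<theta> :: real and \<phi>1 \<phi>2 :: "complex \<Rightarrow> complex" and s1 s2 :: complex
    and lam1 lam2 :: "nat \<Rightarrow> real" and ev1 ev2 :: bool
  assumes "0 < \<theta>" and "\<theta> < 1"
    and "hecke_maass_cusp_form \<phi>1 s1 lam1 ev1"
    and "hecke_maass_cusp_form \<phi>2 s2 lam2 ev2"
  shows "(\<not> (ev1 \<and> ev2) \<longrightarrow> B_theta \<theta> (restrictB \<phi>1) (restrictB \<phi>2) = 0) \<and>
         (ev1 \<and> ev2 \<longrightarrow> B_theta \<theta> (restrictB \<phi>1) (restrictB \<phi>2) =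
            complex_of_real (4 * pi) *
            (\<Sum>\<^sub>\<infinity>(m, n)\<in>{(m::nat, n::nat). 1 \<le> m \<and> 1 \<le> n}.
               complex_of_real (real (tau1 (gcd m n)) * lam1 m * lam2 n / sqrt (real (m * n)))
               * I_theta \<theta> s1 s2 m n))"
proof -
  note H1 = assms(3) and H2 = assms(4)
  define S where "S = {(m::int, n::int). m \<noteq> 0 \<and> n \<noteq> 0}"
  define T where "T a b = of_nat (tau1 (gcd a b)) * complex_of_real (4 * lam1 a * lam2 b / sqrt (real (a * b))) * I_theta \<theta> s1 s2 a b" for a b
  define g where "g = (\<lambda>(m::int, n::int). eps ev1 m * eps ev2 n * T (nat \<bar>m\<bar>) (nat \<bar>n\<bar>))"
  have B: "B_theta \<theta> (restrictB \<phi>1) (restrictB \<phi>2) = complex_of_real (pi / 4) * infsum g S"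
    unfolding B_theta_def S_def
  proof (intro arg_cong[where f="\<lambda>x. complex_of_real (pi / 4) * x"] infsum_cong)
    fix x assume "x \<in> {(m::int, n::int). m \<noteq> 0 \<and> n \<noteq> 0}"
    then obtain m n where x: "x = (m, n)" and m: "m \<noteq> 0" and n: "n \<noteq> 0" by auto
    show "(case x of (m, n) \<Rightarrow> of_nat (tau1 (gcd (nat \<bar>m\<bar>) (nat \<bar>n\<bar>))) *
        (\<integral>y\<in>{0<..}. Vcoef m (restrictB \<phi>1) (y / real_of_int \<bar>m\<bar>) * cnj (Vcoef n (restrictB \<phi>2) (y / real_of_int \<bar>n\<bar>))
             * complex_of_real (fth \<theta> (of_int m) (of_int n) y / y\<^sup>2) \<partial>lborel)) = g x"
      unfolding x g_def T_def using term_int[OF H1 H2 m n, of \<theta>] by (simp add: mult_ac)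
  qed
  have odd1: "infsum g S = 0" if "\<not> ev1"
  proof (rule infsum_odd)
    show "bij_betw (\<lambda>(m::int, n::int). (-m, n)) S S"
      by (rule bij_betwI[where g="\<lambda>(m, n). (-m, n)"]) (auto simp: S_def)
    show "g ((\<lambda>(m::int, n::int). (-m, n)) x) = - g x" if "x \<in> S" for x
      using \<open>\<not> ev1\<close> by (cases x) (simp add: g_def eps_def)
  qed
  have odd2: "infsum g S = 0" if "\<not> ev2"
  proof (rule infsum_odd)
    show "bij_betw (\<lambda>(m::int, n::int). (m, -n)) S S"
      by (rule bij_betwI[where g="\<lambda>(m, n). (m, -n)"]) (auto simp: S_def)
    show "g ((\<lambda>(m::int, n::int). (m, -n)) x) = - g x" if "x \<in> S" for x
      using \<open>\<not> ev2\<close> by (cases x) (simp add: g_def eps_def)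
  qed
  have even: "B_theta \<theta> (restrictB \<phi>1) (restrictB \<phi>2) =
            complex_of_real (4 * pi) *
            (\<Sum>\<^sub>\<infinity>(m, n)\<in>{(m::nat, n::nat). 1 \<le> m \<and> 1 \<le> n}.
               complex_of_real (real (tau1 (gcd m n)) * lam1 m * lam2 n / sqrt (real (m * n)))
               * I_theta \<theta> s1 s2 m n)" if "ev1" "ev2"
  proof -
    have "g = (\<lambda>(m, n). T (nat \<bar>m\<bar>) (nat \<bar>n\<bar>))" using that by (simp add: g_def eps_def)
    then have "infsum g S = 4 * (\<Sum>\<^sub>\<infinity>(m, n)\<in>{(m::nat, n::nat). 1 \<le> m \<and> 1 \<le> n}. T m n)"
      unfolding S_def using infsum_four[of T] by simp
    also have "(\<Sum>\<^sub>\<infinity>(m, n)\<in>{(m::nat, n::nat). 1 \<le> m \<and> 1 \<le> n}. T m n)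
       = (\<Sum>\<^sub>\<infinity>(m, n)\<in>{(m::nat, n::nat). 1 \<le> m \<and> 1 \<le> n}. 4 *
               (complex_of_real (real (tau1 (gcd m n)) * lam1 m * lam2 n / sqrt (real (m * n)))
               * I_theta \<theta> s1 s2 m n))"
      by (rule infsum_cong) (auto simp: T_def)
    also have "\<dots> = 4 * (\<Sum>\<^sub>\<infinity>(m, n)\<in>{(m::nat, n::nat). 1 \<le> m \<and> 1 \<le> n}.
               complex_of_real (real (tau1 (gcd m n)) * lam1 m * lam2 n / sqrt (real (m * n)))
               * I_theta \<theta> s1 s2 m n)"
      by (subst infsum_cmult_right'[symmetric]) (simp add: case_prod_beta')
    finally show ?thesis unfolding B by simp
  qed
  show ?thesis using B odd1 odd2 even by auto
qed

end
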